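(* Let $h,m$ be positive integers with $h=1$ or $\omega(m)=1$, and let $c$ be a positive integer such that no $\mathrm{CC}^h[m]$-circuit computes the $n$-ary conjunction $\mathrm{AND}_n$ for any $n>c$. Then every non-constant Boolean function computable by a $\mathrm{CC}^h[m]$-circuit has balance at least $2^{1-c}$.
   Context: For an integer $m\ge 1$ and $A\subseteq\{0,\dots,m-1\}$, a gate $\mathrm{MOD}_m^A$ takes finitely many Boolean inputs (counted with multiplicity) and outputs $1$ if their sum modulo $m$ lies in $A$, and $0$ otherwise. A $\mathrm{CC}^h[m]$-circuit is a depth-$h$ Boolean circuit all of whose gates are of the form $\mathrm{MOD}_m^A$ ($A$ may vary between gates), with Boolean variable inputs (constants allowed) and multiple wires allowed. $\omega(m)$ is the number of distinct prime divisors of $m$. The balance of an $n$-ary Boolean function $f$ is $\mathrm{bal}(f)=1-\frac{\big||f^{-1}(0)|-|f^{-1}(1)|\big|}{2^n}$. *)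

theory Defs
  imports Complex_Main "HOL-Computational_Algebra.Primes"
begin

text \<open>A gate carries its accepting set A and the list of
  its input wires (sub-circuits; repeated entries model multiple wires).\<close>

datatype circ = Var nat | Cst bool | Gate "nat set" "circ list"

fun depth :: "circ \<Rightarrow> nat" where
  "depth (Var i) = 0"
| "depth (Cst b) = 0"
| "depth (Gate A cs) = Suc (foldr max (map depth cs) 0)"

fun eval :: "nat \<Rightarrow> circ \<Rightarrow> bool list \<Rightarrow> bool" where
  "eval m (Var i) xs = xs ! i"
| "eval m (Cst b) xs = b"
| "eval m (Gate A cs) xs = ((\<Sum>c\<leftarrow>cs. (if eval m c xs then 1 else 0 :: nat)) mod m \<in> A)"

fun wf_circ :: "nat \<Rightarrow> nat \<Rightarrow> circ \<Rightarrow> bool" where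
  "wf_circ m n (Var i) = (i < n)"
| "wf_circ m n (Cst b) = True"
| "wf_circ m n (Gate A cs) = (A \<subseteq> {..<m} \<and> (\<forall>c\<in>set cs. wf_circ m n c))"

definition CC_circuit :: "nat \<Rightarrow> nat \<Rightarrow> nat \<Rightarrow> circ \<Rightarrow> bool" where
  "CC_circuit h m n C \<longleftrightarrow> wf_circ m n C \<and> depth C = h"

text \<open>n-ary Boolean functions are functions on bool lists; only lists of length n matter.\<close>
definition computes :: "nat \<Rightarrow> nat \<Rightarrow> circ \<Rightarrow> (bool list \<Rightarrow> bool) \<Rightarrow> bool" where
  "computes m n C f \<longleftrightarrow> (\<forall>xs. length xs = n \<longrightarrow> eval m C xs = f xs)"

definition CC_computable :: "nat \<Rightarrow> nat \<Rightarrow> nat \<Rightarrow> (bool list \<Rightarrow> bool) \<Rightarrow> bool" where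
  "CC_computable h m n f \<longleftrightarrow> (\<exists>C. CC_circuit h m n C \<and> computes m n C f)"

definition AND_fun :: "nat \<Rightarrow> bool list \<Rightarrow> bool" where
  "AND_fun n xs \<longleftrightarrow> (\<forall>i<n. xs ! i)"

definition nonconstant :: "nat \<Rightarrow> (bool list \<Rightarrow> bool) \<Rightarrow> bool" where
  "nonconstant n f \<longleftrightarrow> (\<exists>xs ys. length xs = n \<and> length ys = n \<and> f xs \<noteq> f ys)"

definition balance :: "nat \<Rightarrow> (bool list \<Rightarrow> bool) \<Rightarrow> real" where
  "balance n f = 1 - \<bar>real (card {xs. length xs = n \<and> \<not> f xs}) - real (card {xs. length xs = n \<and> f xs})\<bar> / 2 ^ n"

definition omega :: "nat \<Rightarrow> nat" where
  "omega m = card (prime_factors m)"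

end

theory Submission
  imports Defs
begin

fun lit_val :: "bool + nat \<times> bool \<Rightarrow> bool list \<Rightarrow> bool" where
  "lit_val (Inl b) ys = b"
| "lit_val (Inr (j, s)) ys = (ys ! j = s)"

definition rho :: "(nat \<Rightarrow> bool + nat \<times> bool) \<Rightarrow> nat \<Rightarrow> bool list \<Rightarrow> bool list" where
  "rho L n ys = map (\<lambda>i. lit_val (L i) ys) [0..<n]"

lemma rho_Suc: "rho (case_nat X L) (Suc n) ys = lit_val X ys # rho L n ys"
  unfolding rho_def by (simp only: map_upt_Suc nat.case)

lemma length_rho[simp]: "length (rho L n ys) = n"
  by (simp add: rho_def)

lemma nth_rho[simp]: "i < n \<Longrightarrow> rho L n ys ! i = lit_val (L i) ys"
  by (simp add: rho_def)

lemma cube: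
  "S \<noteq> {} \<Longrightarrow> (\<forall>xs\<in>S. length xs = n) \<Longrightarrow>
   \<exists>d L. d \<le> n \<and> 2^(n-d) \<le> card S \<and> (\<forall>i<n. \<forall>j s. L i = Inr (j,s) \<longrightarrow> j < d) \<and>
     (\<forall>ys. d \<le> length ys \<longrightarrow> (rho L n ys \<in> S \<longleftrightarrow> (\<forall>i<d. ys!i)))"
proof (induction n arbitrary: S)
  case 0
  then have "S = {[]}" by auto
  then show ?case by (rule_tac x=0 in exI, rule_tac x="\<lambda>_. Inl True" in exI) (auto simp: rho_def)
next
  case (Suc n)
  define SF where "SF = {xs. False # xs \<in> S}"
  define ST where "ST = {xs. True # xs \<in> S}"
  have finS: "finite S"
    by (rule finite_subset[OF _ finite_lists_length_eq[of "UNIV::bool set" "Suc n"]]) (use Suc.prems in auto)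
  have Seq: "S = Cons False ` SF \<union> Cons True ` ST"
  proof
    show "S \<subseteq> Cons False ` SF \<union> Cons True ` ST"
    proof
      fix x assume "x \<in> S"
      with Suc.prems obtain b t where "x = b # t" by (cases x) auto
      with \<open>x \<in> S\<close> show "x \<in> Cons False ` SF \<union> Cons True ` ST" by (cases b) (auto simp: SF_def ST_def)
    qed
  qed (auto simp: SF_def ST_def)
  have finF: "finite SF" using finS unfolding SF_def by (rule finite_vimageI[of _ "Cons False", unfolded vimage_def]) auto
  have finT: "finite ST" using finS unfolding ST_def by (rule finite_vimageI[of _ "Cons True", unfolded vimage_def]) auto
  have cardS: "card S = card SF + card ST"
    unfolding Seq by (subst card_Un_disjoint) (auto simp: finF finT card_image)
  have lenF: "\<forall>xs\<in>SF. length xs = n" and lenT: "\<forall>xs\<in>ST. length xs = n"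
    using Suc.prems by (auto simp: SF_def ST_def)
  consider "SF = {}" | "ST = {}" | "SF \<noteq> {}" "ST \<noteq> {}" by blast
  then show ?case
  proof cases
    case 1
    then have "ST \<noteq> {}" using Suc.prems Seq by blast
    from Suc.IH[OF this lenT] obtain d L where d: "d \<le> n" "2^(n-d) \<le> card ST"
      "\<forall>i<n. \<forall>j s. L i = Inr (j,s) \<longrightarrow> j < d"
      "\<forall>ys. d \<le> length ys \<longrightarrow> (rho L n ys \<in> ST \<longleftrightarrow> (\<forall>i<d. ys!i))" by blast
    show ?thesis
    proof (intro exI conjI allI impI)
      show "Suc d \<le> Suc n" using d by simp
      show "2^(Suc n - Suc d) \<le> card S" using d cardS by simp
      show "j < Suc d" if "i < Suc n" "case_nat (Inr (d, True)) L i = Inr (j, s)" for i j s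
        using that d(3) by (cases i) auto
      fix ys :: "bool list" assume ys: "Suc d \<le> length ys"
      have "rho (case_nat (Inr (d, True)) L) (Suc n) ys \<in> S \<longleftrightarrow> ys ! d \<and> rho L n ys \<in> ST"
        using 1 by (cases "ys ! d") (auto simp: rho_Suc SF_def ST_def)
      also have "\<dots> \<longleftrightarrow> (\<forall>i<Suc d. ys ! i)" using d(4) ys by (auto simp: less_Suc_eq)
      finally show "rho (case_nat (Inr (d, True)) L) (Suc n) ys \<in> S \<longleftrightarrow> (\<forall>i<Suc d. ys ! i)" .
    qed
  next
    case 2
    then have "SF \<noteq> {}" using Suc.prems Seq by blast
    from Suc.IH[OF this lenF] obtain d L where d: "d \<le> n" "2^(n-d) \<le> card SF"
      "\<forall>i<n. \<forall>j s. L i = Inr (j,s) \<longrightarrow> j < d"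
      "\<forall>ys. d \<le> length ys \<longrightarrow> (rho L n ys \<in> SF \<longleftrightarrow> (\<forall>i<d. ys!i))" by blast
    show ?thesis
    proof (intro exI conjI allI impI)
      show "Suc d \<le> Suc n" using d by simp
      show "2^(Suc n - Suc d) \<le> card S" using d cardS by simp
      show "j < Suc d" if "i < Suc n" "case_nat (Inr (d, False)) L i = Inr (j, s)" for i j s
        using that d(3) by (cases i) auto
      fix ys :: "bool list" assume ys: "Suc d \<le> length ys"
      have "rho (case_nat (Inr (d, False)) L) (Suc n) ys \<in> S \<longleftrightarrow> ys ! d \<and> rho L n ys \<in> SF"
        using 2 by (cases "ys ! d") (auto simp: rho_Suc SF_def ST_def)
      also have "\<dots> \<longleftrightarrow> (\<forall>i<Suc d. ys ! i)" using d(4) ys by (auto simp: less_Suc_eq)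
      finally show "rho (case_nat (Inr (d, False)) L) (Suc n) ys \<in> S \<longleftrightarrow> (\<forall>i<Suc d. ys ! i)" .
    qed
  next
    case 3
    obtain b where b: "{xs. b # xs \<in> S} \<noteq> {}" "2 * card {xs. b # xs \<in> S} \<le> card S"
    proof (cases "card SF \<le> card ST")
      case True
      then show ?thesis using that[of False] 3 cardS by (auto simp: SF_def)
    next
      case False
      then show ?thesis using that[of True] 3 cardS by (auto simp: ST_def)
    qed
    have lenb: "\<forall>xs\<in>{xs. b # xs \<in> S}. length xs = n" using Suc.prems by auto
    from Suc.IH[OF b(1) lenb] obtain d L where d: "d \<le> n" "2^(n-d) \<le> card {xs. b # xs \<in> S}"
      "\<forall>i<n. \<forall>j s. L i = Inr (j,s) \<longrightarrow> j < d"
      "\<forall>ys. d \<le> length ys \<longrightarrow> (rho L n ys \<in> {xs. b # xs \<in> S} \<longleftrightarrow> (\<forall>i<d. ys!i))" by blast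
    show ?thesis
    proof (intro exI conjI allI impI)
      show "d \<le> Suc n" using d by simp
      have "Suc n - d = Suc (n - d)" using d by simp
      then show "2^(Suc n - d) \<le> card S" using d(2) b(2) by simp
      show "j < d" if "i < Suc n" "case_nat (Inl b) L i = Inr (j, s)" for i j s
        using that d(3) by (cases i) auto
      fix ys :: "bool list" assume ys: "d \<le> length ys"
      show "rho (case_nat (Inl b) L) (Suc n) ys \<in> S \<longleftrightarrow> (\<forall>i<d. ys ! i)"
        using d(4) ys by (simp add: rho_Suc)
    qed
  qed
qed


fun litc :: "nat \<Rightarrow> bool + nat \<times> bool \<Rightarrow> circ list" where
  "litc m (Inl b) = [Cst b]"
| "litc m (Inr (j, s)) = (if s then [Var j] else Cst True # replicate (m - 1) (Var j))"

fun sub :: "(nat \<Rightarrow> circ list) \<Rightarrow> circ \<Rightarrow> circ list" where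
  "sub \<sigma> (Var i) = \<sigma> i"
| "sub \<sigma> (Cst b) = [Cst b]"
| "sub \<sigma> (Gate A cs) = [Gate A (concat (map (sub \<sigma>) cs))]"

lemma litc_nz: "litc m l \<noteq> [] \<and> (\<forall>c\<in>set (litc m l). depth c = 0)"
  by (cases "(m, l)" rule: litc.cases) auto

definition ind :: "bool \<Rightarrow> nat" where "ind b = (if b then 1 else 0)"

lemma sum_list_mod: "(\<Sum>x\<leftarrow>xs. f x) mod m = (\<Sum>x\<leftarrow>xs. f x mod m) mod m" for f :: "'a \<Rightarrow> nat"
proof (induction xs)
  case (Cons a xs)
  have "(\<Sum>x\<leftarrow>a # xs. f x) mod m = (f a mod m + (\<Sum>x\<leftarrow>xs. f x) mod m) mod m"
    by (simp add: mod_add_eq)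
  also have "\<dots> = (f a mod m + (\<Sum>x\<leftarrow>xs. f x mod m) mod m) mod m" using Cons by simp
  also have "\<dots> = (\<Sum>x\<leftarrow>a # xs. f x mod m) mod m" by (simp add: mod_add_right_eq)
  finally show ?case .
qed simp

lemma sum_list_concat: "(\<Sum>x\<leftarrow>concat xss. f x) = (\<Sum>xs\<leftarrow>xss. \<Sum>x\<leftarrow>xs. f x)" for f :: "'a \<Rightarrow> nat"
  by (induction xss) simp_all

lemma litc_val:
  assumes "m > 0"
  shows "(\<Sum>c\<leftarrow>litc m l. ind (eval m c ys)) mod m = ind (lit_val l ys) mod m"
proof (cases l)
  case (Inl b) then show ?thesis by simp
next
  case (Inr p)
  then obtain j s where p: "l = Inr (j, s)" by (cases p) auto
  show ?thesis
  proof (cases s)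
    case True then show ?thesis using p by simp
  next
    case False
    have "(\<Sum>c\<leftarrow>litc m l. ind (eval m c ys)) = 1 + (m - 1) * ind (ys ! j)"
      using p False by (simp add: ind_def sum_list_replicate)
    then show ?thesis using p False assms by (auto simp: ind_def)
  qed
qed

lemma gate_eq:
  assumes "\<And>c. c \<in> set cs \<Longrightarrow> (\<Sum>c'\<leftarrow>sub \<sigma> c. ind (eval m c' ys)) mod m = ind (eval m c xs) mod m"
  shows "eval m (Gate A (concat (map (sub \<sigma>) cs))) ys = eval m (Gate A cs) xs"
proof -
  have "(\<Sum>c\<leftarrow>concat (map (sub \<sigma>) cs). ind (eval m c ys)) mod m
      = (\<Sum>c\<leftarrow>cs. (\<Sum>c'\<leftarrow>sub \<sigma> c. ind (eval m c' ys)) mod m) mod m"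
    by (simp add: sum_list_concat o_def) (rule sum_list_mod)
  also have "\<dots> = (\<Sum>c\<leftarrow>cs. ind (eval m c xs) mod m) mod m"
    using assms by (metis (mono_tags, lifting) map_eq_conv)
  also have "\<dots> = (\<Sum>c\<leftarrow>cs. ind (eval m c xs)) mod m"
    by (rule sum_list_mod[symmetric])
  finally show ?thesis by (simp add: ind_def)
qed

lemma eval_sub:
  assumes "\<And>i. i < n \<Longrightarrow> (\<Sum>c'\<leftarrow>\<sigma> i. ind (eval m c' ys)) mod m = ind (xs ! i) mod m"
  shows "wf_circ m n c \<Longrightarrow> (\<Sum>c'\<leftarrow>sub \<sigma> c. ind (eval m c' ys)) mod m = ind (eval m c xs) mod m"
proof (induction c)
  case (Var i) then show ?case using assms by simp
next
  case (Cst b) then show ?case by simp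
next
  case (Gate A cs)
  then have "eval m (Gate A (concat (map (sub \<sigma>) cs))) ys = eval m (Gate A cs) xs"
    by (intro gate_eq) auto
  then show ?case by simp
qed

lemma foldr_max_set: "foldr max (xs :: nat list) 0 = Max (insert 0 (set xs))"
  by (induction xs) (simp_all add: insert_commute)

lemma sub_depth:
  assumes "\<And>i. \<sigma> i \<noteq> [] \<and> (\<forall>c\<in>set (\<sigma> i). depth c = 0)"
  shows "sub \<sigma> c \<noteq> [] \<and> (\<forall>c'\<in>set (sub \<sigma> c). depth c' = depth c)"
proof (induction c)
  case (Var i) then show ?case using assms by simp
next
  case (Cst b) then show ?case by simp
next
  case (Gate A cs)
  have "set (map depth (concat (map (sub \<sigma>) cs))) = set (map depth cs)"
  proof -
    have "depth ` (\<Union>c\<in>set cs. set (sub \<sigma> c)) = (\<Union>c\<in>set cs. depth ` set (sub \<sigma> c))" by auto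
    also have "\<dots> = (\<Union>c\<in>set cs. {depth c})"
    proof (intro SUP_cong refl)
      fix c assume "c \<in> set cs"
      then have "sub \<sigma> c \<noteq> []" "\<forall>c'\<in>set (sub \<sigma> c). depth c' = depth c" using Gate.IH by auto
      then show "depth ` set (sub \<sigma> c) = {depth c}" by (cases "sub \<sigma> c") auto
    qed
    finally show ?thesis by auto
  qed
  then show ?case by (simp add: foldr_max_set)
qed

lemma sub_wf:
  assumes "\<And>i. i < n \<Longrightarrow> (\<forall>c\<in>set (\<sigma> i). wf_circ m d c)"
  shows "wf_circ m n c \<Longrightarrow> \<forall>c'\<in>set (sub \<sigma> c). wf_circ m d c'"
  by (induction c) (use assms in auto)


lemma card_len: "card {xs :: bool list. length xs = n} = 2 ^ n"
  using card_lists_length_eq[of "UNIV :: bool set" n] by simp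

lemma powr_bound:
  fixes c d n k :: nat
  assumes "d \<le> n" "2^(n-d) \<le> k" "2 * real k / 2 ^ n < 2 powr (1 - real c)"
  shows "c < d"
proof -
  have "real (2^(n-d)) \<le> real k" using assms(2) by (simp only: of_nat_le_iff)
  then have "2 * real (2^(n-d)) / 2 ^ n \<le> 2 * real k / 2 ^ n"
    by (intro divide_right_mono mult_left_mono) auto
  moreover have "2 * real (2^(n-d)) / 2 ^ n = 2 powr (1 - real d)"
  proof -
    have "2 * real (2^(n-d)) / 2 ^ n = 2 powr 1 * 2 powr (real n - real d) / 2 powr real n"
      using assms(1) by (simp add: powr_realpow[symmetric] of_nat_diff)
    also have "\<dots> = 2 powr (1 + (real n - real d) - real n)"
      by (simp add: powr_add powr_diff)
    finally show ?thesis by simp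
  qed
  ultimately have "2 powr (1 - real d) < 2 powr (1 - real c)" using assms(3) by linarith
  then have "1 - real d < 1 - real c" by simp
  then show ?thesis by simp
qed

theorem corollary2p4:
  fixes h m c :: nat
  assumes "h > 0" and "m > 0" and "h = 1 \<or> omega m = 1" and "c > 0"
    and "\<forall>n>c. \<not> CC_computable h m n (AND_fun n)"
  shows "\<forall>n f. CC_computable h m n f \<and> nonconstant n f \<longrightarrow> balance n f \<ge> 2 powr (1 - real c)"
proof (intro allI impI)
  fix n f assume H: "CC_computable h m n f \<and> nonconstant n f"
  show "balance n f \<ge> 2 powr (1 - real c)"
  proof (rule ccontr)
    assume bal: "\<not> balance n f \<ge> 2 powr (1 - real c)"
    from H obtain C where C: "wf_circ m n C" "depth C = h" "computes m n C f"
      unfolding CC_computable_def CC_circuit_def by blast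
    then obtain A cs where Cg: "C = Gate A cs" using assms(1) by (cases C) auto
    define T where "T = {xs. length xs = n \<and> f xs}"
    define F where "F = {xs. length xs = n \<and> \<not> f xs}"
    have fin: "finite {xs :: bool list. length xs = n}"
      using finite_lists_length_eq[of "UNIV :: bool set" n] by simp
    have finT: "finite T" and finF: "finite F" unfolding T_def F_def by (auto intro: finite_subset[OF _ fin])
    have "card T + card F = 2 ^ n"
    proof -
      have "T \<union> F = {xs. length xs = n}" "T \<inter> F = {}" unfolding T_def F_def by auto
      then show ?thesis using card_Un_disjoint[OF finT finF] card_len by simp
    qed
    then have sumTF: "real (card T) + real (card F) = 2 ^ n" by (metis of_nat_add of_nat_numeral of_nat_power)
    have balTF: "balance n f = 1 - \<bar>real (card F) - real (card T)\<bar> / 2 ^ n"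
      unfolding balance_def T_def F_def by simp
    from H obtain xs0 ys0 where ne: "length xs0 = n" "length ys0 = n" "f xs0 \<noteq> f ys0"
      unfolding nonconstant_def by blast
    have Tne: "T \<noteq> {}" and Fne: "F \<noteq> {}" using ne unfolding T_def F_def by (cases "f xs0"; auto)+
    have wfg: "\<forall>c\<in>set cs. wf_circ m n c" "A \<subseteq> {..<m}" using C(1) Cg by auto
    have ev: "\<And>xs. length xs = n \<Longrightarrow> eval m (Gate A cs) xs = f xs"
      using C(3) Cg unfolding computes_def by auto
    obtain S A' where SA: "S \<noteq> {}" "\<forall>xs\<in>S. length xs = n" "balance n f = 2 * real (card S) / 2 ^ n"
      "A' \<subseteq> {..<m}" "\<And>xs. length xs = n \<Longrightarrow> eval m (Gate A' cs) xs \<longleftrightarrow> xs \<in> S"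
    proof (cases "card T \<le> card F")
      case True
      have "\<bar>real (card F) - real (card T)\<bar> = 2 ^ n - 2 * real (card T)"
        using True sumTF by linarith
      then have "balance n f = 2 * real (card T) / 2 ^ n"
        unfolding balTF by (simp add: diff_divide_distrib)
      then show ?thesis
      proof (rule that[of T A, rotated 2])
        show "T \<noteq> {}" by (rule Tne)
        show "\<forall>xs\<in>T. length xs = n" by (simp add: T_def)
        show "A \<subseteq> {..<m}" by (rule wfg(2))
        show "eval m (Gate A cs) xs \<longleftrightarrow> xs \<in> T" if "length xs = n" for xs
          using ev[OF that] that by (simp add: T_def)
      qed
    next
      case False
      have "\<bar>real (card F) - real (card T)\<bar> = 2 ^ n - 2 * real (card F)"
        using False sumTF by linarith
      then have "balance n f = 2 * real (card F) / 2 ^ n"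
        unfolding balTF by (simp add: diff_divide_distrib)
      then show ?thesis
      proof (rule that[of F "{..<m} - A", rotated 2])
        show "F \<noteq> {}" by (rule Fne)
        show "\<forall>xs\<in>F. length xs = n" by (simp add: F_def)
        show "{..<m} - A \<subseteq> {..<m}" by blast
        show "eval m (Gate ({..<m} - A) cs) xs \<longleftrightarrow> xs \<in> F" if "length xs = n" for xs
          using ev[OF that] that assms(2) by (simp add: F_def)
      qed
    qed
    from cube[OF SA(1,2)] obtain d L where dL: "d \<le> n" "2^(n-d) \<le> card S"
      "\<forall>i<n. \<forall>j s. L i = Inr (j,s) \<longrightarrow> j < d"
      "\<forall>ys. d \<le> length ys \<longrightarrow> (rho L n ys \<in> S \<longleftrightarrow> (\<forall>i<d. ys!i))" by blast
    have cd: "c < d" using powr_bound[OF dL(1,2)] SA(3) bal by simp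
    define \<sigma> where "\<sigma> = (\<lambda>i. litc m (L i))"
    define C2 where "C2 = Gate A' (concat (map (sub \<sigma>) cs))"
    have wf2: "wf_circ m d C2"
    proof -
      have "\<forall>c\<in>set (\<sigma> i). wf_circ m d c" if "i < n" for i
      proof (cases "L i")
        case (Inl b) then show ?thesis by (simp add: \<sigma>_def)
      next
        case (Inr p)
        then obtain j s where "L i = Inr (j, s)" by (cases p) auto
        moreover have "j < d" using dL(3) that calculation by blast
        ultimately show ?thesis by (simp add: \<sigma>_def)
      qed
      then have "\<forall>c'\<in>set (sub \<sigma> c). wf_circ m d c'" if "c \<in> set cs" for c
        using sub_wf[of n \<sigma> m d c] wfg(1) that by blast
      then show ?thesis using SA(4) by (auto simp: C2_def)
    qed
    have dep2: "depth C2 = h"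
    proof -
      have nz: "\<sigma> i \<noteq> [] \<and> (\<forall>c\<in>set (\<sigma> i). depth c = 0)" for i
        unfolding \<sigma>_def by (rule litc_nz)
      have "\<forall>c'\<in>set (sub \<sigma> (Gate A' cs)). depth c' = depth (Gate A' cs)"
        using sub_depth[of \<sigma>, OF nz] by blast
      then have "depth C2 = depth (Gate A' cs)" by (simp add: C2_def)
      also have "\<dots> = h" using C(2) Cg by simp
      finally show ?thesis .
    qed
    have comp2: "computes m d C2 (AND_fun d)"
      unfolding computes_def
    proof (intro allI impI)
      fix ys :: "bool list" assume ys: "length ys = d"
      have hyp: "(\<Sum>c'\<leftarrow>\<sigma> i. ind (eval m c' ys)) mod m = ind (rho L n ys ! i) mod m" if "i < n" for i
        using litc_val[OF assms(2)] that by (simp add: \<sigma>_def)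
      have "eval m C2 ys = eval m (Gate A' cs) (rho L n ys)"
        unfolding C2_def
        by (rule gate_eq, rule eval_sub[OF hyp]) (use wfg(1) in auto)
      also have "\<dots> \<longleftrightarrow> rho L n ys \<in> S" using SA(5) by simp
      also have "\<dots> \<longleftrightarrow> (\<forall>i<d. ys!i)" using dL(4) ys by simp
      finally show "eval m C2 ys = AND_fun d ys" by (simp add: AND_fun_def)
    qed
    have "CC_computable h m d (AND_fun d)"
      unfolding CC_computable_def CC_circuit_def using wf2 dep2 comp2 by blast
    then show False using assms(5) cd by blast
  qed
qed

end
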